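(* Let $\sigma_\theta$, $A_\theta$, $\Sigma$ be as in the context, with $\Sigma\ne\emptyset$, and assume that for every $\delta>0$ there is $\nu_\delta>0$ such that $A_\theta(x)\ge\nu_\delta I$ for all $\theta\in\Theta$ and all $x\in\mathbb T^N$ with $\operatorname{dist}(x,\Sigma)>\delta$. Then for every $\kappa>0$ the condition (SS$_\kappa$) holds.
   Context: $\mathbb T^N=\mathbb R^N/\mathbb Z^N$, $\Theta$ a metric space, $C>0$ fixed; for each $\theta\in\Theta$, $\sigma_\theta\in W^{1,\infty}(\mathbb T^N;\mathcal M_N)$ with $|\sigma_\theta|,|D\sigma_\theta|\le C$ and $A_\theta=\sigma_\theta\sigma_\theta^T$. $\Sigma:=\{x\in\mathbb T^N:A_\theta(x)=0\ \forall\theta\}$. $\pi:\mathbb R^N\to\mathbb T^N$ is the projection; $\tilde\Sigma=\pi^{-1}(\Sigma)$, $\tilde\sigma_\theta=\sigma_\theta\circ\pi$, $\tilde A_\theta=\tilde\sigma_\theta\tilde\sigma_\theta^T$, $\tilde\Sigma_\delta=\{\tilde x:\operatorname{dist}(\tilde x,\tilde\Sigma)\le\delta\}$. Condition (SS$_\kappa$): for every $\delta>0$ there exist $\tilde\psi_\delta\in C^2(\mathbb R^N)$ and a bounded open set $\Omega_\delta\subset\mathbb R^N$ with $[0,1]^N\subset\Omega_\delta$, $\tilde\psi_\delta\le0$ in $\Omega_\delta$, $\tilde\psi_\delta\ge0$ in $\mathbb R^N\setminus\Omega_\delta$, and $\inf_{\theta\in\Theta}\{-\mathrm{tr}(\tilde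 A_\theta(\tilde x)D^2\tilde\psi_\delta(\tilde x))\}-\kappa|D\tilde\psi_\delta(\tilde x)|>0$ for all $\tilde x\in\tilde\Sigma_\delta^C\cap\Omega_\delta$. *)

theory Defs
  imports "HOL-Analysis.Analysis"
begin

text \<open>Functions on the torus T^N are represented by their Z^N-periodic lifts to R^N.\<close>

definition int_vec :: "real^'n \<Rightarrow> bool" where
  "int_vec k \<longleftrightarrow> (\<forall>i. k $ i \<in> \<int>)"

definition zn_periodic :: "(real^'n \<Rightarrow> 'b) \<Rightarrow> bool" where
  "zn_periodic f \<longleftrightarrow> (\<forall>x k. int_vec k \<longrightarrow> f (x + k) = f x)"

definition C2_with :: "(real^'n \<Rightarrow> real) \<Rightarrow> (real^'n \<Rightarrow> real^'n) \<Rightarrow> (real^'n \<Rightarrow> real^'n^'n) \<Rightarrow> bool" where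
  "C2_with psi Dpsi D2psi \<longleftrightarrow>
     (\<forall>x. (psi has_derivative (\<lambda>h. Dpsi x \<bullet> h)) (at x)) \<and>
     (\<forall>x. (Dpsi has_derivative (\<lambda>h. D2psi x *v h)) (at x)) \<and>
     continuous_on UNIV D2psi"

definition unit_cube :: "(real^'n) set" where
  "unit_cube = {x. \<forall>i. 0 \<le> x $ i \<and> x $ i \<le> 1}"

end

theory Submission
  imports Defs
begin


lemma trace_outer: fixes a :: "real^'n^'n" and v :: "real^'n"
  shows "trace (a ** (\<chi> i j. k * ((if i = j then 1 else 0) - c * v$i * v$j)))
     = k * (trace a - c * (v \<bullet> (a *v v)))"
proof -
  have "trace (a ** (\<chi> i j. k * ((if i = j then 1 else 0) - c * v$i * v$j)))
     = (\<Sum>i\<in>UNIV. \<Sum>j\<in>UNIV. k * (if j = i then a$i$j else 0) - k * c * (v$i * (a$i$j * v$j)))"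
    unfolding trace_def matrix_matrix_mult_def
    by (intro sum.cong refl) (auto simp: algebra_simps intro!: sum.cong)
  also have "\<dots> = (\<Sum>i\<in>UNIV. k * a$i$i - k * c * (v$i * (\<Sum>j\<in>UNIV. a$i$j * v$j)))"
    by (simp add: sum_subtractf sum_distrib_left[symmetric] sum.delta)
  also have "\<dots> = k * (trace a - c * (v \<bullet> (a *v v)))"
    by (simp add: trace_def inner_vec_def matrix_vector_mult_def sum_subtractf sum_distrib_left algebra_simps)
  finally show ?thesis .
qed

lemma deriv1: fixes p :: "real^'n"
  shows "((\<lambda>x. c - exp (- \<mu> * ((x-p)\<bullet>(x-p)))) has_derivative
     (\<lambda>h. ((2*\<mu>*exp (- \<mu> * ((x-p)\<bullet>(x-p)))) *\<^sub>R (x-p)) \<bullet> h)) (at x)"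
  apply (rule derivative_eq_intros refl | simp)+
  apply (simp add: fun_eq_iff inner_commute algebra_simps)
  done



lemma mv_outer: fixes v h :: "real^'n"
  shows "(\<chi> i j. k * ((if i = j then 1 else 0) - c * v$i * v$j)) *v h = k *\<^sub>R h - (k * c * (v \<bullet> h)) *\<^sub>R v"
proof -
  have "(\<Sum>j\<in>UNIV. k * ((if i = j then 1 else 0) - c * v$i * v$j) * h$j)
      = k * h$i - (k * c * (\<Sum>j\<in>UNIV. v$j * h$j)) * v$i" for i
  proof -
    have "(\<Sum>j\<in>UNIV. k * ((if i = j then 1 else 0) - c * v$i * v$j) * h$j)
      = (\<Sum>j\<in>UNIV. (if i = j then k * h$j else 0) - (k * c * v$i) * (v$j * h$j))"
      by (intro sum.cong) (auto simp: algebra_simps)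
    also have "\<dots> = k * h$i - (k * c * v$i) * (\<Sum>j\<in>UNIV. v$j * h$j)"
      by (simp add: sum_subtractf sum_distrib_left)
    finally show ?thesis by simp
  qed
  then show ?thesis
    by (simp add: vec_eq_iff matrix_vector_mult_def inner_vec_def)
qed

lemma deriv2: fixes p :: "real^'n"
  shows "((\<lambda>x. (2*\<mu>*exp (- \<mu> * ((x-p)\<bullet>(x-p)))) *\<^sub>R (x-p)) has_derivative
     (\<lambda>h. (\<chi> i j. (2*\<mu>*exp (- \<mu> * ((x-p)\<bullet>(x-p)))) * ((if i = j then 1 else 0) - (2*\<mu>) * (x-p)$i * (x-p)$j)) *v h)) (at x)"
  unfolding mv_outer
  apply (rule derivative_eq_intros refl | simp)+
  apply (simp add: fun_eq_iff inner_commute algebra_simps)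
  done

lemma cont2: fixes p :: "real^'n"
  shows "continuous_on UNIV (\<lambda>x. (\<chi> i j. (2*\<mu>*exp (- \<mu> * ((x-p)\<bullet>(x-p)))) * ((if i = j then 1 else 0) - (2*\<mu>) * (x-p)$i * (x-p)$j)) :: real^'n^'n)"
  by (intro continuous_intros)


lemma trace_sq: fixes s :: "real^'n^'n"
  shows "trace (s ** transpose s) = (norm s)^2"
proof -
  have "(norm s)^2 = (\<Sum>i\<in>UNIV. (norm (s$i))^2)"
    unfolding norm_vec_def L2_set_def by (simp add: sum_nonneg)
  also have "\<dots> = (\<Sum>i\<in>UNIV. \<Sum>k\<in>UNIV. (s$i$k)^2)"
    unfolding norm_vec_def L2_set_def by (simp add: sum_nonneg)
  finally show ?thesis
    by (simp add: trace_def matrix_matrix_mult_def transpose_def power2_eq_square)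
qed

theorem proposition2p5:
  fixes \<sigma> :: "'th::metric_space \<Rightarrow> real^'n \<Rightarrow> real^'n^'n"
    and C :: real
  defines "A \<equiv> (\<lambda>\<theta> x. \<sigma> \<theta> x ** transpose (\<sigma> \<theta> x))"
  defines "Sig \<equiv> {x. \<forall>\<theta>. A \<theta> x = 0}"
  assumes C_pos: "C > 0"
    and periodic: "\<And>\<theta>. zn_periodic (\<sigma> \<theta>)"
    and bounded: "\<And>\<theta> x. norm (\<sigma> \<theta> x) \<le> C"
    and lipschitz: "\<And>\<theta> x y. dist (\<sigma> \<theta> x) (\<sigma> \<theta> y) \<le> C * dist x y"
    and Sig_ne: "Sig \<noteq> {}"
    and nondeg: "\<And>\<delta>. \<delta> > 0 \<Longrightarrow> \<exists>\<nu>>0. \<forall>\<theta> x \<xi>. infdist x Sig > \<delta> \<longrightarrow>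
                     \<xi> \<bullet> (A \<theta> x *v \<xi>) \<ge> \<nu> * (norm \<xi>)\<^sup>2"
    and kappa_pos: "\<kappa> > 0"
    and delta_pos: "\<delta> > 0"
  shows "\<exists>\<psi> D\<psi> D2\<psi> (\<Omega> :: (real^'n) set).
           C2_with \<psi> D\<psi> D2\<psi> \<and> open \<Omega> \<and> bounded \<Omega> \<and> unit_cube \<subseteq> \<Omega> \<and>
           (\<forall>x\<in>\<Omega>. \<psi> x \<le> 0) \<and> (\<forall>x. x \<notin> \<Omega> \<longrightarrow> \<psi> x \<ge> 0) \<and>
           (\<forall>x\<in>\<Omega>. infdist x Sig > \<delta> \<longrightarrow>
              (\<exists>m > \<kappa> * norm (D\<psi> x). \<forall>\<theta>. - trace (A \<theta> x ** D2\<psi> x) \<ge> m))"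
  proof -
  obtain p where pS: "p \<in> Sig" using Sig_ne by blast
  obtain \<nu> where nu: "\<nu> > 0" and nuA: "\<And>\<theta> x \<xi>. infdist x Sig > \<delta> \<Longrightarrow> \<xi> \<bullet> (A \<theta> x *v \<xi>) \<ge> \<nu> * (norm \<xi>)\<^sup>2"
    using nondeg[OF delta_pos] by blast
  define a where "a = \<kappa> + C\<^sup>2/\<delta> + 1"
  have a_pos: "a > 0" using kappa_pos delta_pos unfolding a_def by (simp add: add_pos_nonneg)
  define \<mu> where "\<mu> = a / (2*\<nu>*\<delta>)"
  have mu_pos: "\<mu> > 0" using a_pos nu delta_pos unfolding \<mu>_def by simp
  have two_mu_nu: "2*\<mu>*\<nu> = a/\<delta>" using nu delta_pos unfolding \<mu>_def by (simp add: field_simps)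
  define R where "R = norm p + real CARD('n) + 1"
  define \<psi> where "\<psi> = (\<lambda>x::real^'n. exp (- \<mu> * R\<^sup>2) - exp (- \<mu> * ((x-p)\<bullet>(x-p))))"
  define D\<psi> where "D\<psi> = (\<lambda>x::real^'n. (2*\<mu>*exp (- \<mu> * ((x-p)\<bullet>(x-p)))) *\<^sub>R (x-p))"
  define D2\<psi> where "D2\<psi> = (\<lambda>x::real^'n. (\<chi> i j. (2*\<mu>*exp (- \<mu> * ((x-p)\<bullet>(x-p)))) * ((if i = j then 1 else 0) - (2*\<mu>) * (x-p)$i * (x-p)$j)) :: real^'n^'n)"
  have C2: "C2_with \<psi> D\<psi> D2\<psi>"
    unfolding C2_with_def \<psi>_def D\<psi>_def D2\<psi>_def using deriv1 deriv2 cont2 by blast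
  have sq: "(x-p)\<bullet>(x-p) = (dist x p)\<^sup>2" for x :: "real^'n"
    by (simp add: dist_norm power2_norm_eq_inner)
  have cube: "unit_cube \<subseteq> ball p R"
  proof
    fix x :: "real^'n" assume "x \<in> unit_cube"
    then have "\<bar>x$i\<bar> \<le> 1" for i unfolding unit_cube_def by auto
    then have "(\<Sum>i\<in>UNIV. \<bar>x$i\<bar>) \<le> (\<Sum>i\<in>(UNIV::'n set). 1)" by (intro sum_mono) auto
    then have "norm x \<le> real CARD('n)" using norm_le_l1_cart[of x] by simp
    then have "dist p x < R" unfolding R_def using norm_triangle_ineq4[of p x] by (simp add: dist_norm)
    then show "x \<in> ball p R" by simp
  qed
  have neg: "\<forall>x\<in>ball p R. \<psi> x \<le> 0"
  proof
    fix x assume "x \<in> ball p R"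
    then have "dist x p < R" by (simp add: dist_commute)
    then have "(dist x p)\<^sup>2 \<le> R\<^sup>2" by (intro power_mono) auto
    then show "\<psi> x \<le> 0" unfolding \<psi>_def sq using mu_pos by (simp add: mult_left_mono)
  qed
  have pos: "\<forall>x. x \<notin> ball p R \<longrightarrow> \<psi> x \<ge> 0"
  proof (intro allI impI)
    fix x assume "x \<notin> ball p R"
    then have "R \<le> dist x p" by (simp add: dist_commute)
    moreover have "0 \<le> R" unfolding R_def by simp
    ultimately have "R\<^sup>2 \<le> (dist x p)\<^sup>2" by (intro power_mono) auto
    then show "\<psi> x \<ge> 0" unfolding \<psi>_def sq using mu_pos by (simp add: mult_left_mono)
  qed
  have main: "\<exists>m > \<kappa> * norm (D\<psi> x). \<forall>\<theta>. - trace (A \<theta> x ** D2\<psi> x) \<ge> m"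
    if xd: "infdist x Sig > \<delta>" for x
  proof -
    define v where "v = x - p"
    define e where "e = exp (- \<mu> * (v\<bullet>v))"
    define k where "k = 2*\<mu>*e"
    have k_pos: "k > 0" unfolding k_def e_def using mu_pos by simp
    have "infdist x Sig \<le> dist x p" using pS by (rule infdist_le)
    then have nv: "norm v > \<delta>" using xd unfolding v_def by (simp add: dist_norm)
    have vv: "v \<bullet> v = (norm v)\<^sup>2" by (simp add: power2_norm_eq_inner)
    define m where "m = k * (2*\<mu>*\<nu>*(norm v)\<^sup>2 - C\<^sup>2)"
    have "\<kappa> * norm (D\<psi> x) = k * (\<kappa> * norm v)"
      unfolding D\<psi>_def k_def e_def v_def using mu_pos by simp
    moreover have "\<kappa> * norm v < 2*\<mu>*\<nu>*(norm v)\<^sup>2 - C\<^sup>2"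
    proof -
      have r: "norm v / \<delta> > 1" using nv delta_pos by simp
      have "2*\<mu>*\<nu>*(norm v)\<^sup>2 = a * norm v * (norm v / \<delta>)"
        unfolding two_mu_nu by (simp add: power2_eq_square)
      also have "\<dots> > a * norm v * 1"
        using r a_pos nv delta_pos by (intro mult_strict_left_mono) (simp_all, smt (verit) mult_pos_pos)
      finally have "2*\<mu>*\<nu>*(norm v)\<^sup>2 > a * norm v" by simp
      moreover have "a * norm v = \<kappa> * norm v + C\<^sup>2 * (norm v/\<delta>) + norm v"
        unfolding a_def by (simp add: field_simps)
      moreover have "C\<^sup>2 * (norm v/\<delta>) \<ge> C\<^sup>2 * 1" using r by (intro mult_left_mono) auto
      moreover have "norm v > 0" using nv delta_pos by (smt (verit) norm_ge_zero)
      ultimately show ?thesis by linarith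
    qed
    ultimately have mgt: "m > \<kappa> * norm (D\<psi> x)" unfolding m_def using k_pos by (metis mult_strict_left_mono)
    have "- trace (A \<theta> x ** D2\<psi> x) \<ge> m" for \<theta>
    proof -
      have tr: "trace (A \<theta> x ** D2\<psi> x) = k * (trace (A \<theta> x) - 2*\<mu> * (v \<bullet> (A \<theta> x *v v)))"
        unfolding D2\<psi>_def k_def e_def v_def by (rule trace_outer)
      have "trace (A \<theta> x) = (norm (\<sigma> \<theta> x))\<^sup>2" unfolding A_def by (rule trace_sq)
      also have "\<dots> \<le> C\<^sup>2" using bounded[of \<theta> x] by (intro power_mono) auto
      finally have t1: "trace (A \<theta> x) \<le> C\<^sup>2" .
      have t2: "v \<bullet> (A \<theta> x *v v) \<ge> \<nu> * (norm v)\<^sup>2" using nuA[OF xd] by blast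
      have "2*\<mu>*\<nu>*(norm v)\<^sup>2 - C\<^sup>2 \<le> 2*\<mu> * (v \<bullet> (A \<theta> x *v v)) - trace (A \<theta> x)"
      proof -
        have "2*\<mu>*(\<nu> * (norm v)\<^sup>2) \<le> 2*\<mu>*(v \<bullet> (A \<theta> x *v v))"
          using t2 mu_pos by (intro mult_left_mono) auto
        then show ?thesis using t1 by (simp add: algebra_simps)
      qed
      then have "m \<le> k * (2*\<mu> * (v \<bullet> (A \<theta> x *v v)) - trace (A \<theta> x))"
        unfolding m_def using k_pos by (intro mult_left_mono) auto
      then show ?thesis unfolding tr by (simp add: algebra_simps)
    qed
    then show ?thesis using mgt by blast
  qed
  show ?thesis
    apply (rule exI[of _ \<psi>], rule exI[of _ D\<psi>], rule exI[of _ D2\<psi>], rule exI[of _ "ball p R"])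
    using C2 cube neg pos main by auto
qed

end
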